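(* Let $m,g>0$ and $0<c<1$, and consider the hybrid system on $(x,y)\in T^*\mathbb{R}^+$: $$\dot x=\tfrac{1}{m}y,\quad \dot y=-mg\quad (x>0);\qquad (x,y)\mapsto(x,-c^2y)\quad (x=0,\ y<0).$$ For initial data $(x_0,y_0)$ with $x_0\ge 0$ (and $y_0>0$ if $x_0=0$) let $\zeta(x_0,y_0)$ be the Zeno time, i.e. the limit of the impact times: $$\zeta(x_0,y_0)=\frac{1}{mg}\Big(y_0+\sqrt{y_0^2+2m^2gx_0}\Big)+\frac{2c^2}{mg(1-c^2)}\sqrt{y_0^2+2m^2gx_0}.$$ Fix $y_0>0$ and consider the trajectory from $(0,y_0)$, with Zeno time $t_Z=\frac{2y_0}{mg(1-c^2)}$. Let $\Phi(t)$ be the state-transition matrix of the hybrid variational equation $\delta\dot z=A\,\delta z$ between impacts and $\delta z^+=J(y^-)\,\delta z^-$ at impacts, where $$A=\begin{bmatrix}0&1/m\\0&0\end{bmatrix},\qquad J(y)=\begin{bmatrix}-c^2&0\\-\frac{m^2g}{y}(1+c^2)&-c^2\end{bmatrix},$$ $y^-<0$ being the momentum just before the impact, and $\Phi(0)=I$. Then the limit $\Phi_Z=\lim_{t\nearrow t_Z}\Phi(t)$ exists and equals $$\Phi_Z=\begin{bmatrix}0&0\\ \frac{m^2g}{y_0}\frac{1+c^2}{1-c^2}&\frac{2}{1-c^2}\end{bmatrix},$$ so $\det\Phi_Z=0$, and moreover $\ker d\zeta_{(0,y_0)}=\ker\Phi_Z$ (both spanned by $(-2y_0,\ m^2g(1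+c^2))^\top$).
   Context: $J(y)$ is the saltation (hybrid Jacobian) matrix of the reset at the guard $x=0$. The product defining $\Phi$ multiplies successive factors on the left. *)

theory Defs
  imports "HOL-Analysis.Analysis"
begin

text \<open>Continuous flow of  x' = y/m, y' = -m g  for time s.\<close>
definition bb_flow :: "real \<Rightarrow> real \<Rightarrow> real \<Rightarrow> real \<times> real \<Rightarrow> real \<times> real" where
  "bb_flow m g s z = (fst z + snd z * s / m - g * s^2 / 2, snd z - m * g * s)"

definition bb_flight_time :: "real \<Rightarrow> real \<Rightarrow> real \<times> real \<Rightarrow> real" where
  "bb_flight_time m g z = Inf {s. 0 < s \<and> fst (bb_flow m g s z) = 0}"

definition bb_reset :: "real \<Rightarrow> real \<times> real \<Rightarrow> real \<times> real" where
  "bb_reset c z = (fst z, - (c^2) * snd z)"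

fun bb_state :: "real \<Rightarrow> real \<Rightarrow> real \<Rightarrow> real \<times> real \<Rightarrow> nat \<Rightarrow> real \<times> real" where
  "bb_state m g c z0 0 = z0"
| "bb_state m g c z0 (Suc k) =
     bb_reset c (bb_flow m g (bb_flight_time m g (bb_state m g c z0 k)) (bb_state m g c z0 k))"

fun bb_impact_time :: "real \<Rightarrow> real \<Rightarrow> real \<Rightarrow> real \<times> real \<Rightarrow> nat \<Rightarrow> real" where
  "bb_impact_time m g c z0 0 = 0"
| "bb_impact_time m g c z0 (Suc k) =
     bb_impact_time m g c z0 k + bb_flight_time m g (bb_state m g c z0 k)"

text \<open>Momentum y^- just before the (k+1)-th impact.\<close>
definition bb_pre_mom :: "real \<Rightarrow> real \<Rightarrow> real \<Rightarrow> real \<times> real \<Rightarrow> nat \<Rightarrow> real" where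
  "bb_pre_mom m g c z0 k =
     snd (bb_flow m g (bb_flight_time m g (bb_state m g c z0 k)) (bb_state m g c z0 k))"

text \<open>State-transition matrix exp(A s) of  \<delta>z' = A \<delta>z  with A = [[0,1/m],[0,0]].\<close>
definition bb_expA :: "real \<Rightarrow> real \<Rightarrow> real^2^2" where
  "bb_expA m s = vector [vector [1, s / m], vector [0, 1]]"

definition bb_J :: "real \<Rightarrow> real \<Rightarrow> real \<Rightarrow> real \<Rightarrow> real^2^2" where
  "bb_J m g c y = vector [vector [- (c^2), 0], vector [- (m^2 * g / y) * (1 + c^2), - (c^2)]]"

fun bb_M :: "real \<Rightarrow> real \<Rightarrow> real \<Rightarrow> real \<times> real \<Rightarrow> nat \<Rightarrow> real^2^2" where
  "bb_M m g c z0 0 = mat 1"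
| "bb_M m g c z0 (Suc k) =
     bb_J m g c (bb_pre_mom m g c z0 k) ** bb_expA m (bb_flight_time m g (bb_state m g c z0 k))
       ** bb_M m g c z0 k"

definition bb_Phi :: "real \<Rightarrow> real \<Rightarrow> real \<Rightarrow> real \<times> real \<Rightarrow> real \<Rightarrow> real^2^2" where
  "bb_Phi m g c z0 t =
     (let k = (SOME k. bb_impact_time m g c z0 k \<le> t \<and> t < bb_impact_time m g c z0 (Suc k))
      in bb_expA m (t - bb_impact_time m g c z0 k) ** bb_M m g c z0 k)"

text \<open>Zeno time as a function of the initial data (x0, y0) = (w$1, w$2).\<close>
definition bb_zeta :: "real \<Rightarrow> real \<Rightarrow> real \<Rightarrow> real^2 \<Rightarrow> real" where
  "bb_zeta m g c w =
     (1 / (m * g)) * (w$2 + sqrt ((w$2)^2 + 2 * m^2 * g * w$1))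
     + (2 * c^2 / (m * g * (1 - c^2))) * sqrt ((w$2)^2 + 2 * m^2 * g * w$1)"

end

theory Submission
  imports Defs
begin

abbreviation mat2 :: "real \<Rightarrow> real \<Rightarrow> real \<Rightarrow> real \<Rightarrow> real^2^2" where
  "mat2 a b c d \<equiv> vector [vector [a, b], vector [c, d]]"

lemma mat2_nth: "mat2 a b c d $ 1 $ 1 = a" "mat2 a b c d $ 1 $ 2 = b"
  "mat2 a b c d $ 2 $ 1 = c" "mat2 a b c d $ 2 $ 2 = d"
  by simp_all

lemma mat2_eq: "(A::real^2^2) = mat2 (A$1$1) (A$1$2) (A$2$1) (A$2$2)"
  by (simp add: vec_eq_iff forall_2)

lemma mat2_mult: "mat2 a b c d ** mat2 a' b' c' d' =
   mat2 (a*a' + b*c') (a*b' + b*d') (c*a' + d*c') (c*b' + d*d')"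
  by (simp add: vec_eq_iff forall_2 matrix_matrix_mult_def sum_2)

lemma mat1_eq: "(mat 1 :: real^2^2) = mat2 1 0 0 1"
  by (simp add: vec_eq_iff forall_2 mat_def)

lemma flight:
  assumes m: "m > 0" and g: "g > 0" and y: "y > 0"
  shows "bb_flight_time m g (0, y) = 2 * y / (m * g)"
proof -
  have "{s. 0 < s \<and> fst (bb_flow m g s (0, y)) = 0} = {2 * y / (m * g)}"
  proof (safe)
    fix s assume s: "0 < s" "fst (bb_flow m g s (0, y)) = 0"
    then have "s * (y / m - g * s / 2) = 0" by (simp add: bb_flow_def power2_eq_square algebra_simps)
    then have "y / m = g * s / 2" using s by simp
    then show "s = 2 * y / (m * g)" using m g by (simp add: field_simps)
  next
    show "0 < 2 * y / (m * g)" using m g y by simp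
    show "fst (bb_flow m g (2 * y / (m * g)) (0, y)) = 0"
      using m g by (simp add: bb_flow_def power2_eq_square field_simps)
  qed
  then show ?thesis by (simp add: bb_flight_time_def)
qed

lemma state:
  assumes m: "m > 0" and g: "g > 0" and y: "y0 > 0" and c: "c > 0"
  shows "bb_state m g c (0, y0) k = (0, (c^2)^k * y0)"
proof (induction k)
  case 0 then show ?case by simp
next
  case (Suc k)
  have p: "(c^2)^k * y0 > 0" using c y by simp
  show ?case using m g unfolding bb_state.simps Suc flight[OF m g p]
    by (simp add: bb_flow_def bb_reset_def power2_eq_square field_simps)
qed

lemma premom:
  assumes m: "m > 0" and g: "g > 0" and y: "y0 > 0" and c: "c > 0"
  shows "bb_pre_mom m g c (0, y0) k = - ((c^2)^k * y0)"
proof -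
  have p: "(c^2)^k * y0 > 0" using c y by simp
  show ?thesis using m g unfolding bb_pre_mom_def state[OF assms] flight[OF m g p]
    by (simp add: bb_flow_def)
qed

lemma ftime:
  assumes m: "m > 0" and g: "g > 0" and y: "y0 > 0" and c: "c > 0"
  shows "bb_flight_time m g (bb_state m g c (0, y0) k) = 2 * (c^2)^k * y0 / (m * g)"
proof -
  have p: "(c^2)^k * y0 > 0" using c y by simp
  show ?thesis unfolding state[OF assms] flight[OF m g p] by simp
qed

lemma itime:
  assumes m: "m > 0" and g: "g > 0" and y: "y0 > 0" and c: "c > 0" and c1: "c < 1"
  shows "bb_impact_time m g c (0, y0) k = 2 * y0 * (1 - (c^2)^k) / (m * g * (1 - c^2))"
proof (induction k)
  case 0 then show ?case by simp
next
  case (Suc k)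
  have "c^2 < 1" using c c1 by (simp add: power_less_one_iff)
  then show ?case unfolding bb_impact_time.simps Suc ftime[OF m g y c] using m g
    by (simp add: field_simps)
qed

lemma Mstep:
  fixes m g q Q y0 al be ga de :: real
  assumes m: "m > 0" and g: "g > 0" and y: "y0 > 0" and Q: "Q > 0"
  defines "a \<equiv> m^2 * g"
  shows "mat2 (- q) 0 (- (a / (- (Q * y0))) * (1 + q)) (- q) ** mat2 1 (2 * Q * y0 / (m * g) / m) 0 1
     ** mat2 al (be * y0 / a) (ga * a / y0) de
   = mat2 (-q*al - 2*q*Q*ga) ((-q*be - 2*q*Q*de)*y0/a) (((1+q)/Q*al + (2+q)*ga)*a/y0) ((1+q)/Q*be + (2+q)*de)"
proof -
  have a: "a > 0" using m g by (simp add: a_def)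
  have s: "2 * Q * y0 / (m * g) / m = 2 * Q * y0 / a" using m g by (simp add: a_def power2_eq_square)
  have e1: "- (a / (- (Q * y0))) * (1 + q) = a * (1 + q) / (Q * y0)" by simp
  show ?thesis unfolding s e1 mat2_mult
    apply (simp add: vec_eq_iff forall_2)
    using a y Q apply (intro conjI)
    apply (simp_all add: field_simps)
    done
qed

lemma recur:
  fixes q Q :: real
  assumes q: "q \<noteq> 1" and Q: "Q > 0"
  shows "-q*(Q * (2 * Q - 1 - q) / (1 - q)) - 2*q*Q*((1 + q) * (1 - Q) / (1 - q)) = (q*Q) * (2 * (q*Q) - 1 - q) / (1 - q)"
    "-q*(2 * Q * (Q - 1) / (1 - q)) - 2*q*Q*((2 - (1 + q) * Q) / (1 - q)) = 2 * (q*Q) * ((q*Q) - 1) / (1 - q)"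
    "(1+q)/Q*(Q * (2 * Q - 1 - q) / (1 - q)) + (2+q)*((1 + q) * (1 - Q) / (1 - q)) = (1 + q) * (1 - (q*Q)) / (1 - q)"
    "(1+q)/Q*(2 * Q * (Q - 1) / (1 - q)) + (2+q)*((2 - (1 + q) * Q) / (1 - q)) = (2 - (1 + q) * (q*Q)) / (1 - q)"
proof -
  define d where "d = inverse (1 - q)"
  define iQ where "iQ = inverse Q"
  have iQ: "Q * iQ = 1" using Q by (simp add: iQ_def)
  have e: "\<And>x. x / (1 - q) = x * d" "\<And>x. x / Q = x * iQ" by (simp_all add: d_def iQ_def divide_inverse)
  show "-q*(Q * (2 * Q - 1 - q) / (1 - q)) - 2*q*Q*((1 + q) * (1 - Q) / (1 - q)) = (q*Q) * (2 * (q*Q) - 1 - q) / (1 - q)"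
    unfolding e by algebra
  show "-q*(2 * Q * (Q - 1) / (1 - q)) - 2*q*Q*((2 - (1 + q) * Q) / (1 - q)) = 2 * (q*Q) * ((q*Q) - 1) / (1 - q)"
    unfolding e by algebra
  show "(1+q)/Q*(Q * (2 * Q - 1 - q) / (1 - q)) + (2+q)*((1 + q) * (1 - Q) / (1 - q)) = (1 + q) * (1 - (q*Q)) / (1 - q)"
    unfolding e using iQ by algebra
  show "(1+q)/Q*(2 * Q * (Q - 1) / (1 - q)) + (2+q)*((2 - (1 + q) * Q) / (1 - q)) = (2 - (1 + q) * (q*Q)) / (1 - q)"
    unfolding e using iQ by algebra
qed

lemma Mk:
  assumes m: "m > 0" and g: "g > 0" and y: "y0 > 0" and c: "c > 0" and c1: "c < 1"
  defines "q \<equiv> c^2" and "a \<equiv> m^2 * g"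
  shows "bb_M m g c (0, y0) k = mat2 (q^k * (2 * q^k - 1 - q) / (1 - q))
      ((2 * q^k * (q^k - 1) / (1 - q)) * y0 / a)
      (((1 + q) * (1 - q^k) / (1 - q)) * a / y0) ((2 - (1 + q) * q^k) / (1 - q))"
proof (induction k)
  case 0 
  have "q < 1" using c c1 by (simp add: q_def power_less_one_iff)
  then show ?case by (simp add: mat1_eq)
next
  case (Suc k)
  have q1: "q < 1" using c c1 by (simp add: q_def power_less_one_iff)
  have qk: "q^k > 0" using c by (simp add: q_def)
  have q1': "q \<noteq> 1" using q1 by simp
  have "bb_M m g c (0,y0) (Suc k) = mat2 (-q) 0 (-(a/(-(q^k*y0)))*(1+q)) (-q) ** mat2 1 (2*q^k*y0/(m*g)/m) 0 1 ** bb_M m g c (0,y0) k"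
    unfolding bb_M.simps ftime[OF m g y c] premom[OF m g y c] bb_J_def bb_expA_def q_def a_def by simp
  also have "\<dots> = mat2 (-q*(q^k * (2 * q^k - 1 - q) / (1 - q)) - 2*q*q^k*((1 + q) * (1 - q^k) / (1 - q)))
     ((-q*(2 * q^k * (q^k - 1) / (1 - q)) - 2*q*q^k*((2 - (1 + q) * q^k) / (1 - q)))*y0/a)
     (((1+q)/q^k*(q^k * (2 * q^k - 1 - q) / (1 - q)) + (2+q)*((1 + q) * (1 - q^k) / (1 - q)))*a/y0)
     ((1+q)/q^k*(2 * q^k * (q^k - 1) / (1 - q)) + (2+q)*((2 - (1 + q) * q^k) / (1 - q)))"
    unfolding Suc.IH a_def by (rule Mstep[OF m g y qk])
  also have "\<dots> = mat2 (q^Suc k * (2 * q^Suc k - 1 - q) / (1 - q))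
      ((2 * q^Suc k * (q^Suc k - 1) / (1 - q)) * y0 / a)
      (((1 + q) * (1 - q^Suc k) / (1 - q)) * a / y0) ((2 - (1 + q) * q^Suc k) / (1 - q))"
    unfolding recur[OF q1' qk] power_Suc ..
  finally show ?case .
qed

lemma vec_nth_deriv[derivative_intros]: "((\<lambda>w. w $ i) has_derivative (\<lambda>v. v $ i)) F"
  by (rule bounded_linear.has_derivative[OF bounded_linear_vec_nth has_derivative_ident])

lemma zeta_deriv:
  assumes m: "m > 0" and g: "g > 0" and y: "y0 > 0" and c: "c^2 \<noteq> 1"
  shows "(bb_zeta m g c has_derivative (\<lambda>v. 1/(m*g)*(v$2 + (y0* v$2 + m^2*g* v$1)/y0) + (2 * c^2 / (m * g * (1 - c^2)))*((y0* v$2 + m^2*g* v$1)/y0))) (at (vector [0, y0]))"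
  unfolding bb_zeta_def[abs_def]
  apply (rule derivative_eq_intros refl | simp add: y less_imp_neq[OF y, symmetric])+
  apply (rule ext)
  using m g y c apply (simp add: abs_of_pos[OF y] field_simps)
  done
lemma tendsto_mat2:
  assumes "(f1 \<longlongrightarrow> a1) F" "(f2 \<longlongrightarrow> a2) F" "(f3 \<longlongrightarrow> a3) F" "(f4 \<longlongrightarrow> a4) F"
  shows "((\<lambda>t. mat2 (f1 t) (f2 t) (f3 t) (f4 t)) \<longlongrightarrow> mat2 a1 a2 a3 a4) F"
proof (rule vec_tendstoI)
  fix i :: 2
  have r1: "((\<lambda>t. vector [f1 t, f2 t] :: real^2) \<longlongrightarrow> vector [a1, a2]) F"
  proof (rule vec_tendstoI)
    fix j :: 2 show "((\<lambda>t. (vector [f1 t, f2 t] :: real^2) $ j) \<longlongrightarrow> (vector [a1, a2] :: real^2) $ j) F"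
      using exhaust_2[of j] assms by auto
  qed
  have r2: "((\<lambda>t. vector [f3 t, f4 t] :: real^2) \<longlongrightarrow> vector [a3, a4]) F"
  proof (rule vec_tendstoI)
    fix j :: 2 show "((\<lambda>t. (vector [f3 t, f4 t] :: real^2) $ j) \<longlongrightarrow> (vector [a3, a4] :: real^2) $ j) F"
      using exhaust_2[of j] assms by auto
  qed
  show "((\<lambda>t. mat2 (f1 t) (f2 t) (f3 t) (f4 t) $ i) \<longlongrightarrow> mat2 a1 a2 a3 a4 $ i) F"
    using exhaust_2[of i] r1 r2 by auto
qed

lemma itime2:
  assumes m: "m > 0" and g: "g > 0" and y: "y0 > 0" and c: "c > 0" and c1: "c < 1"
  shows "bb_impact_time m g c (0, y0) k = (2 * y0 / (m * g * (1 - c^2))) * (1 - (c^2)^k)"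
  unfolding itime[OF assms] by simp

lemma Phi_lim:
  assumes m: "m > 0" and g: "g > 0" and y: "y0 > 0" and c: "c > 0" and c1: "c < 1"
  defines "tZ \<equiv> 2 * y0 / (m * g * (1 - c^2))"
      and "PhiZ \<equiv> vector [vector [0, 0],
                    vector [(m^2 * g / y0) * ((1 + c^2) / (1 - c^2)), 2 / (1 - c^2)]] :: real^2^2"
  shows "(bb_Phi m g c (0, y0) \<longlongrightarrow> PhiZ) (at_left tZ)"
proof -
  define q where "q = c^2"
  define a where "a = m^2 * g"
  define T where "T = bb_impact_time m g c (0, y0)"
  have q0: "q > 0" using c by (simp add: q_def)
  have q1: "q < 1" using c c1 by (simp add: q_def power_less_one_iff)
  have a0: "a > 0" using m g by (simp add: a_def)
  have tZ0: "tZ > 0" using m g y q1 by (simp add: tZ_def q_def[symmetric])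
  have Tk: "T k = tZ * (1 - q^k)" for k
    unfolding T_def itime2[OF m g y c c1] tZ_def q_def ..
  have Tlim: "T \<longlonglongrightarrow> tZ"
  proof -
    have "(\<lambda>k. q^k) \<longlonglongrightarrow> 0" by (rule LIMSEQ_power_zero) (use q0 q1 in simp)
    then have "(\<lambda>k. tZ * (1 - q^k)) \<longlonglongrightarrow> tZ * (1 - 0)" by (rule tendsto_mult[OF tendsto_const tendsto_diff[OF tendsto_const]])
    then show ?thesis unfolding Tk by simp
  qed
  have ex: "\<exists>k. T k \<le> t \<and> t < T (Suc k)" if t: "0 \<le> t" "t < tZ" for t
  proof (rule ccontr)
    assume "\<not> ?thesis"
    then have st: "T k \<le> t \<Longrightarrow> T (Suc k) \<le> t" for k by (meson not_le)
    have all: "T k \<le> t" for k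
    proof (induction k)
      case 0 then show ?case using t by (simp add: T_def)
    next
      case (Suc k) then show ?case using st by blast
    qed
    have "tZ \<le> t" using Tlim all by (intro LIMSEQ_le_const2) auto
    then show False using t by simp
  qed
  define K where "K t = (SOME k. T k \<le> t \<and> t < T (Suc k))" for t
  have K: "T (K t) \<le> t \<and> t < T (Suc (K t))" if "0 \<le> t" "t < tZ" for t
    unfolding K_def using someI_ex[OF ex[OF that]] .
  define S where "S t = t - T (K t)" for t
  define P where "P t = q ^ (K t)" for t
  have bnds: "0 \<le> S t \<and> S t \<le> (tZ - t) / q \<and> 0 \<le> P t \<and> P t \<le> (tZ - t) / (tZ * q)"
    if t: "0 \<le> t" "t < tZ" for t
  proof -
    have k1: "tZ * (1 - q^K t) \<le> t" and k2: "t < tZ * (1 - q * q^K t)"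
      using K[OF t] unfolding Tk by auto
    have pk: "q ^ K t \<ge> 0" using q0 by simp
    have "tZ * q * q^K t < tZ - t" using k2 by (simp add: algebra_simps)
    then have p1: "q^K t \<le> (tZ - t) / (tZ * q)" using tZ0 q0 by (simp add: field_simps)
    have "S t \<le> tZ * q^K t" using k1 t unfolding S_def Tk by (simp add: algebra_simps)
    also have "\<dots> \<le> (tZ - t) / q" using p1 tZ0 q0 by (simp add: field_simps)
    finally show ?thesis using k1 pk p1 t unfolding S_def P_def Tk by simp
  qed
  have ev: "eventually (\<lambda>t. 0 \<le> t \<and> t < tZ) (at_left tZ)"
    using eventually_at_left_real[OF tZ0] by eventually_elim auto
  have lim1: "((\<lambda>t. (tZ - t) / q) \<longlongrightarrow> (tZ - tZ) / q) (at_left tZ)"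
    using q0 by (intro tendsto_intros) simp
  have lim2: "((\<lambda>t. (tZ - t) / (tZ * q)) \<longlongrightarrow> (tZ - tZ) / (tZ * q)) (at_left tZ)"
    using q0 tZ0 by (intro tendsto_intros) simp
  have Slim: "(S \<longlongrightarrow> 0) (at_left tZ)"
    by (rule tendsto_sandwich[where f="\<lambda>_. 0" and h="\<lambda>t. (tZ - t) / q"])
      (use ev bnds lim1 in \<open>auto elim: eventually_mono\<close>)
  have Plim: "(P \<longlongrightarrow> 0) (at_left tZ)"
    by (rule tendsto_sandwich[where f="\<lambda>_. 0" and h="\<lambda>t. (tZ - t) / (tZ * q)"])
      (use ev bnds lim2 in \<open>auto elim: eventually_mono\<close>)
  have Phi_eq: "bb_Phi m g c (0, y0) t = mat2
      (P t * (2 * P t - 1 - q) / (1 - q) + S t / m * ((1 + q) * (1 - P t) / (1 - q) * a / y0))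
      (2 * P t * (P t - 1) / (1 - q) * y0 / a + S t / m * ((2 - (1 + q) * P t) / (1 - q)))
      ((1 + q) * (1 - P t) / (1 - q) * a / y0) ((2 - (1 + q) * P t) / (1 - q))" for t
  proof -
    have "bb_Phi m g c (0, y0) t = bb_expA m (S t) ** bb_M m g c (0, y0) (K t)"
      unfolding bb_Phi_def S_def K_def T_def Let_def ..
    also have "\<dots> = mat2
      (P t * (2 * P t - 1 - q) / (1 - q) + S t / m * ((1 + q) * (1 - P t) / (1 - q) * a / y0))
      (2 * P t * (P t - 1) / (1 - q) * y0 / a + S t / m * ((2 - (1 + q) * P t) / (1 - q)))
      ((1 + q) * (1 - P t) / (1 - q) * a / y0) ((2 - (1 + q) * P t) / (1 - q))"
      unfolding Mk[OF m g y c c1] bb_expA_def mat2_mult P_def q_def a_def by simp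
    finally show ?thesis .
  qed
  have "((\<lambda>t. mat2
      (P t * (2 * P t - 1 - q) / (1 - q) + S t / m * ((1 + q) * (1 - P t) / (1 - q) * a / y0))
      (2 * P t * (P t - 1) / (1 - q) * y0 / a + S t / m * ((2 - (1 + q) * P t) / (1 - q)))
      ((1 + q) * (1 - P t) / (1 - q) * a / y0) ((2 - (1 + q) * P t) / (1 - q))) \<longlongrightarrow> mat2
      (0 * (2 * 0 - 1 - q) / (1 - q) + 0 / m * ((1 + q) * (1 - 0) / (1 - q) * a / y0))
      (2 * 0 * (0 - 1) / (1 - q) * y0 / a + 0 / m * ((2 - (1 + q) * 0) / (1 - q)))
      ((1 + q) * (1 - 0) / (1 - q) * a / y0) ((2 - (1 + q) * 0) / (1 - q))) (at_left tZ)"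
    using q1 m y a0 by (intro tendsto_mat2 tendsto_intros Slim Plim) auto
  also have "mat2
      (0 * (2 * 0 - 1 - q) / (1 - q) + 0 / m * ((1 + q) * (1 - 0) / (1 - q) * a / y0))
      (2 * 0 * (0 - 1) / (1 - q) * y0 / a + 0 / m * ((2 - (1 + q) * 0) / (1 - q)))
      ((1 + q) * (1 - 0) / (1 - q) * a / y0) ((2 - (1 + q) * 0) / (1 - q)) = PhiZ"
    unfolding PhiZ_def q_def a_def by (simp add: field_simps)
  finally show ?thesis unfolding Phi_eq[abs_def] by simp
qed
theorem proposition6p7:
  fixes m g c y0 :: real
  assumes "m > 0" and "g > 0" and "0 < c" and "c < 1" and "y0 > 0"
  defines "tZ \<equiv> 2 * y0 / (m * g * (1 - c^2))"
      and "PhiZ \<equiv> vector [vector [0, 0],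
                    vector [(m^2 * g / y0) * ((1 + c^2) / (1 - c^2)), 2 / (1 - c^2)]] :: real^2^2"
  shows "(bb_impact_time m g c (0, y0) \<longlonglongrightarrow> tZ)
    \<and> (bb_zeta m g c (vector [0, y0]) = tZ)
    \<and> ((bb_Phi m g c (0, y0) \<longlongrightarrow> PhiZ) (at_left tZ))
    \<and> (det PhiZ = 0)
    \<and> (bb_zeta m g c differentiable (at (vector [0, y0])))
    \<and> (\<forall>D. (bb_zeta m g c has_derivative D) (at (vector [0, y0])) \<longrightarrow>
           {v. D v = 0} = {v. PhiZ *v v = 0}
         \<and> {v. D v = 0} = span {vector [- 2 * y0, m^2 * g * (1 + c^2)] :: real^2})"
proof -
  note m = assms(1) and g = assms(2) and c = assms(3) and c1 = assms(4) and y = assms(5)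
  define q where "q = c^2"
  define a where "a = m^2 * g"
  have q0: "q > 0" using c by (simp add: q_def)
  have q1: "q < 1" using c c1 by (simp add: q_def power_less_one_iff)
  have a0: "a > 0" using m g by (simp add: a_def)
  have P1: "bb_impact_time m g c (0, y0) \<longlonglongrightarrow> tZ"
  proof -
    have "(\<lambda>k. q^k) \<longlonglongrightarrow> 0" by (rule LIMSEQ_power_zero) (use q0 q1 in simp)
    then have "(\<lambda>k. tZ * (1 - q^k)) \<longlonglongrightarrow> tZ * (1 - 0)"
      by (rule tendsto_mult[OF tendsto_const tendsto_diff[OF tendsto_const]])
    then show ?thesis unfolding itime2[OF m g y c c1] tZ_def q_def by simp
  qed
  have P2: "bb_zeta m g c (vector [0, y0]) = tZ"
    unfolding bb_zeta_def tZ_def using m g y q1 by (simp add: q_def[symmetric] field_simps)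
  have P3: "(bb_Phi m g c (0, y0) \<longlongrightarrow> PhiZ) (at_left tZ)"
    unfolding tZ_def PhiZ_def by (rule Phi_lim[OF m g y c c1])
  have P4: "det PhiZ = 0" unfolding PhiZ_def det_2 by simp
  have cq: "c^2 \<noteq> 1" using q1 by (simp add: q_def)
  note ZD = zeta_deriv[OF m g y cq]
  have P5: "bb_zeta m g c differentiable (at (vector [0, y0]))"
    using ZD by (rule differentiableI)
  define w where "w = (vector [- 2 * y0, m^2 * g * (1 + c^2)] :: real^2)"
  have key: "1/(m*g)*(v$2 + (y0* v$2 + m^2*g* v$1)/y0) + (2 * c^2 / (m * g * (1 - c^2)))*((y0* v$2 + m^2*g* v$1)/y0)
      = (a * (1 + q) / y0 * v$1 + 2 * v$2) / (m * g * (1 - q))" for v :: "real^2"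
    unfolding a_def q_def using m g y cq by (simp add: field_simps)
  have den: "m * g * (1 - q) \<noteq> 0" using m g q1 by simp
  have Pv: "PhiZ *v v = 0 \<longleftrightarrow> a * (1 + q) / y0 * v$1 + 2 * v$2 = 0" for v :: "real^2"
  proof -
    have "PhiZ *v v = 0 \<longleftrightarrow> (a / y0 * ((1 + q) / (1 - q))) * v$1 + 2 / (1 - q) * v$2 = 0"
      unfolding PhiZ_def by (simp add: vec_eq_iff forall_2 matrix_vector_mult_def sum_2 a_def q_def)
    also have "(a / y0 * ((1 + q) / (1 - q))) * v$1 + 2 / (1 - q) * v$2 = (a * (1 + q) / y0 * v$1 + 2 * v$2) / (1 - q)"
      by (simp only: divide_inverse) algebra
    also have "\<dots> = 0 \<longleftrightarrow> a * (1 + q) / y0 * v$1 + 2 * v$2 = 0"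
      using q1 by simp
    finally show ?thesis .
  qed
  have Sv: "v \<in> span {w} \<longleftrightarrow> a * (1 + q) / y0 * v$1 + 2 * v$2 = 0" for v :: "real^2"
  proof
    assume "v \<in> span {w}"
    then obtain k where "v = k *\<^sub>R w" by (auto simp: span_singleton)
    then show "a * (1 + q) / y0 * v$1 + 2 * v$2 = 0"
      using y by (simp add: w_def a_def q_def field_simps)
  next
    assume h: "a * (1 + q) / y0 * v$1 + 2 * v$2 = 0"
    have "v = (v$2 / (a * (1 + q))) *\<^sub>R w"
    proof -
      have b: "a * (1 + q) \<noteq> 0" using a0 q0 by simp
      have "a * (1 + q) * v$1 = - 2 * y0 * v$2"
      proof -
        have "a * (1 + q) / y0 * v$1 = - 2 * v$2" using h by linarith
        then have "a * (1 + q) * v$1 = - 2 * v$2 * y0" using y by (simp add: field_simps)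
        then show ?thesis by (simp add: algebra_simps)
      qed
      then have "v$1 = - 2 * y0 * (v$2 / (a * (1 + q)))"
        using b by (simp add: field_simps)
      moreover have "v$2 = (v$2 / (a * (1 + q))) * (a * (1 + q))"
        using a0 q0 by simp
      ultimately show ?thesis
        by (simp add: vec_eq_iff forall_2 w_def a_def q_def)
    qed
    then show "v \<in> span {w}" by (auto simp: span_singleton)
  qed
  have P6: "\<forall>D. (bb_zeta m g c has_derivative D) (at (vector [0, y0])) \<longrightarrow>
           {v. D v = 0} = {v. PhiZ *v v = 0}
         \<and> {v. D v = 0} = span {vector [- 2 * y0, m^2 * g * (1 + c^2)] :: real^2}"
  proof (intro allI impI)
    fix D assume "(bb_zeta m g c has_derivative D) (at (vector [0, y0]))"
    then have D: "D = (\<lambda>v. 1/(m*g)*(v$2 + (y0* v$2 + m^2*g* v$1)/y0) + (2 * c^2 / (m * g * (1 - c^2)))*((y0* v$2 + m^2*g* v$1)/y0))"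
      using ZD by (rule has_derivative_unique)
    have Dz: "D v = 0 \<longleftrightarrow> a * (1 + q) / y0 * v$1 + 2 * v$2 = 0" for v
      unfolding D key using den by simp
    show "{v. D v = 0} = {v. PhiZ *v v = 0} \<and> {v. D v = 0} = span {vector [- 2 * y0, m^2 * g * (1 + c^2)] :: real^2}"
      using Dz Pv Sv unfolding w_def by auto
  qed
  show ?thesis using P1 P2 P3 P4 P5 P6 by blast
qed

end
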